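(* A real symmetric $2\times 2$ matrix is perfect copositive if and only if it is a classical perfect matrix whose off-diagonal entry is negative.
   Context: For $B\in\mathcal{S}^n$ (real symmetric $n\times n$ matrices) write $B[v]=v^\top Bv$. Classical notions: for positive definite $Q$, $\min Q=\min\{Q[v]: v\in\mathbb{Z}^n\setminus\{0\}\}$ and $\operatorname{Min}Q=\{v\in\mathbb{Z}^n: Q[v]=\min Q\}$; a positive definite $Q$ is (classically) perfect if it is the unique $Q'\in\mathcal{S}^n$ with $Q'[v]=\min Q$ for all $v\in\operatorname{Min}Q$. Copositive notions: $\mathcal{COP}^n=\{B\in\mathcal{S}^n: B[x]\ge 0\ \forall x\in\mathbb{R}^n_{\ge0}\}$; $B$ is strictly copositive if it lies in the interior of $\mathcal{COP}^n$; $\min_{\mathcal{COP}}B=\inf\{B[v]: v\in\mathbb{Z}^n_{\ge0}\setminus\{0\}\}$, $\operatorname{Min}_{\mathcal{COP}}B=\{v\in\mathbb{Z}^n_{\ge0}: B[v]=\min_{\mathcal{COP}}B\}$; a strictly copositive $P$ is perfect copositive if it is the unique $Q\in\mathcal{S}^n$ with $Q[v]=\min_{\mathcal{COP}}P$ for all $v\in\operatorname{Min}_{\mathcal{COP}}P$. *)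

theory Defs
  imports "HOL-Analysis.Analysis"
begin

definition symm :: "real^'n^'n \<Rightarrow> bool" where
  "symm B \<longleftrightarrow> transpose B = B"

definition qf :: "real^'n^'n \<Rightarrow> real^'n \<Rightarrow> real" where
  "qf B v = v \<bullet> (B *v v)"

definition int_vec :: "real^'n \<Rightarrow> bool" where
  "int_vec v \<longleftrightarrow> (\<forall>i. v $ i \<in> \<int>)"

definition nonneg_vec :: "real^'n \<Rightarrow> bool" where
  "nonneg_vec v \<longleftrightarrow> (\<forall>i. v $ i \<ge> 0)"

definition pos_def :: "real^'n^'n \<Rightarrow> bool" where
  "pos_def Q \<longleftrightarrow> symm Q \<and> (\<forall>x. x \<noteq> 0 \<longrightarrow> qf Q x > 0)"

definition min_cl :: "real^'n^'n \<Rightarrow> real" where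
  "min_cl Q = Inf {qf Q v | v. int_vec v \<and> v \<noteq> 0}"

definition Min_cl :: "real^'n^'n \<Rightarrow> (real^'n) set" where
  "Min_cl Q = {v. int_vec v \<and> qf Q v = min_cl Q}"

definition perfect :: "real^'n^'n \<Rightarrow> bool" where
  "perfect Q \<longleftrightarrow> pos_def Q \<and>
     (\<forall>Q'. symm Q' \<longrightarrow> (\<forall>v \<in> Min_cl Q. qf Q' v = min_cl Q) \<longrightarrow> Q' = Q)"

definition copositive :: "real^'n^'n \<Rightarrow> bool" where
  "copositive B \<longleftrightarrow> symm B \<and> (\<forall>x. nonneg_vec x \<longrightarrow> qf B x \<ge> 0)"

definition strictly_copositive :: "real^'n^'n \<Rightarrow> bool" where
  "strictly_copositive B \<longleftrightarrow> symm B \<and>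
     (\<exists>e>0. \<forall>B'. symm B' \<and> norm (B' - B) < e \<longrightarrow> copositive B')"

definition min_cop :: "real^'n^'n \<Rightarrow> real" where
  "min_cop B = Inf {qf B v | v. int_vec v \<and> nonneg_vec v \<and> v \<noteq> 0}"

definition Min_cop :: "real^'n^'n \<Rightarrow> (real^'n) set" where
  "Min_cop B = {v. int_vec v \<and> nonneg_vec v \<and> qf B v = min_cop B}"

definition perfect_copositive :: "real^'n^'n \<Rightarrow> bool" where
  "perfect_copositive P \<longleftrightarrow> strictly_copositive P \<and>
     (\<forall>Q. symm Q \<longrightarrow> (\<forall>v \<in> Min_cop P. qf Q v = min_cop P) \<longrightarrow> Q = P)"

end

theory Submission
  imports Defs
begin

definition v2 :: "real \<Rightarrow> real \<Rightarrow> real^2" where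
  "v2 x y = (\<chi> i. if i = 1 then x else y)"

lemma v2_nth[simp]: "v2 x y $ 1 = x" "v2 x y $ 2 = y"
  by (auto simp: v2_def)

definition absv :: "real^2 \<Rightarrow> real^2" where
  "absv x = (\<chi> i. \<bar>x$i\<bar>)"

lemma absv_nth[simp]: "absv x $ i = \<bar>x$i\<bar>"
  by (simp add: absv_def)

lemma qf2: "qf (B::real^2^2) x = B$1$1*(x$1)^2 + (B$1$2 + B$2$1)*(x$1*x$2) + B$2$2*(x$2)^2"
  unfolding qf_def inner_vec_def matrix_vector_mult_def
  by (simp add: sum_2 algebra_simps power2_eq_square)

lemma vec2_eq: "(x::real^2) = y \<longleftrightarrow> x$1 = y$1 \<and> x$2 = y$2"
  by (simp add: vec_eq_iff forall_2)

lemma mat2_eq: "(A::real^2^2) = B \<longleftrightarrow> A$1$1 = B$1$1 \<and> A$1$2 = B$1$2 \<and> A$2$1 = B$2$1 \<and> A$2$2 = B$2$2"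
  by (simp add: vec_eq_iff forall_2)

lemma symm2: "symm (A::real^2^2) \<longleftrightarrow> A$1$2 = A$2$1"
  unfolding symm_def by (auto simp: vec_eq_iff forall_2 transpose_def)

lemma entry_le_norm: "\<bar>(B::real^2^2)$i$j\<bar> \<le> norm B"
proof -
  have "\<bar>B$i$j\<bar> \<le> norm (B$i)" by (rule component_le_norm_cart)
  also have "\<dots> \<le> norm B" by (rule Finite_Cartesian_Product.norm_nth_le)
  finally show ?thesis .
qed

lemma one_ne_two: "(1::2) \<noteq> 2" by simp

lemma int_absv: "int_vec x \<Longrightarrow> int_vec (absv x)"
  unfolding int_vec_def by simp

lemma nonneg_absv: "nonneg_vec (absv x)"
  unfolding nonneg_vec_def by simp

lemma absv_nz: "x \<noteq> 0 \<Longrightarrow> absv x \<noteq> 0"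
  by (simp add: vec_eq_iff)

lemma qf_absv_le:
  assumes "symm A" "A$1$2 \<le> 0"
  shows "qf A (absv x) \<le> qf A x"
proof -
  have s: "A$2$1 = A$1$2" using assms symm2 by auto
  have "x$1*x$2 \<le> \<bar>x$1\<bar>*\<bar>x$2\<bar>" by (metis abs_ge_self abs_mult)
  hence "A$1$2 * (\<bar>x$1\<bar>*\<bar>x$2\<bar>) \<le> A$1$2 * (x$1*x$2)" using assms(2)
    by (simp add: mult_left_mono_neg)
  thus ?thesis unfolding qf2 s by (simp add: power2_abs)
qed

lemma qf_absv_lt:
  assumes "symm A" "A$1$2 < 0" "x$1*x$2 < 0"
  shows "qf A (absv x) < qf A x"
proof -
  have s: "A$2$1 = A$1$2" using assms symm2 by auto
  have "x$1*x$2 < \<bar>x$1\<bar>*\<bar>x$2\<bar>" using assms(3)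
    by (simp add: abs_mult[symmetric])
  hence "A$1$2 * (\<bar>x$1\<bar>*\<bar>x$2\<bar>) < A$1$2 * (x$1*x$2)" using assms(2)
    by (simp add: mult_less_cancel_left_neg)
  thus ?thesis unfolding qf2 s by (simp add: power2_abs)
qed

lemma qf_absv_eq:
  assumes "symm Q" "x$1*x$2 \<ge> 0"
  shows "qf Q (absv x) = qf Q x"
proof -
  have "\<bar>x$1\<bar>*\<bar>x$2\<bar> = x$1*x$2" using assms(2) by (metis abs_mult abs_of_nonneg)
  thus ?thesis unfolding qf2 by (simp add: power2_abs)
qed

lemma min_eq:
  fixes A :: "real^2^2"
  assumes "symm A" "A$1$2 \<le> 0" and bdd: "\<And>v. nonneg_vec v \<Longrightarrow> qf A v \<ge> 0"
  shows "min_cl A = min_cop A"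
proof -
  let ?C = "{qf A v | v. int_vec v \<and> v \<noteq> 0}"
  let ?P = "{qf A v | v. int_vec v \<and> nonneg_vec v \<and> v \<noteq> 0}"
  have e1: "int_vec (v2 1 0) \<and> nonneg_vec (v2 1 0) \<and> v2 1 0 \<noteq> 0"
    by (auto simp: int_vec_def nonneg_vec_def forall_2 vec2_eq)
  hence neP: "?P \<noteq> {}" by blast
  have sub: "?P \<subseteq> ?C" by blast
  have bP: "bdd_below ?P" using bdd by (auto intro!: bdd_belowI[of _ 0])
  have bC: "bdd_below ?C"
  proof (rule bdd_belowI[of _ 0])
    fix t assume "t \<in> ?C"
    then obtain v where v: "t = qf A v" by blast
    have "0 \<le> qf A (absv v)" using bdd nonneg_absv by blast
    also have "\<dots> \<le> t" using v qf_absv_le[OF assms(1,2)] by simp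
    finally show "0 \<le> t" .
  qed
  have "Inf ?C \<le> Inf ?P" using cInf_superset_mono[OF neP bC sub] .
  moreover have "Inf ?P \<le> Inf ?C"
  proof (rule cInf_greatest)
    show "?C \<noteq> {}" using neP sub by blast
  next
    fix t assume "t \<in> ?C"
    then obtain v where v: "t = qf A v" "int_vec v" "v \<noteq> 0" by blast
    have "qf A (absv v) \<in> ?P" using v int_absv nonneg_absv absv_nz by blast
    hence "Inf ?P \<le> qf A (absv v)" using bP by (rule cInf_lower)
    also have "\<dots> \<le> t" using v qf_absv_le[OF assms(1,2)] by simp
    finally show "Inf ?P \<le> t" .
  qed
  ultimately show ?thesis unfolding min_cl_def min_cop_def by simp
qed


lemma norm_le_l1_2: "norm (B::real^2^2) \<le> \<bar>B$1$1\<bar>+\<bar>B$1$2\<bar>+\<bar>B$2$1\<bar>+\<bar>B$2$2\<bar>"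
proof -
  have "norm B \<le> (\<Sum>i\<in>UNIV. norm (B$i))" unfolding norm_vec_def by (rule L2_set_le_sum) simp
  also have "\<dots> \<le> (\<Sum>i\<in>UNIV. \<Sum>j\<in>UNIV. \<bar>B$i$j\<bar>)" by (rule sum_mono) (rule norm_le_l1_cart)
  finally show ?thesis by (simp add: sum_2 add.assoc)
qed

lemma int_ge1: "(x::real) \<in> \<int> \<Longrightarrow> x > 0 \<Longrightarrow> x \<ge> 1"
  by (metis Ints_cases of_int_0_less_iff of_int_1_le_iff zero_less_imp_eq_int int_one_le_iff_zero_less)

lemma qf_zero[simp]: "qf B 0 = 0" by (simp add: qf_def)

lemma min_cop_le:
  assumes "\<And>v. nonneg_vec v \<Longrightarrow> qf A v \<ge> 0" "int_vec v" "nonneg_vec v" "v \<noteq> 0"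
  shows "min_cop A \<le> qf A v"
  unfolding min_cop_def
  by (rule cInf_lower) (use assms in \<open>auto intro!: bdd_belowI[of _ 0]\<close>)

theorem theorem4p1:
  fixes A :: "real^2^2"
  assumes "symm A"
  shows "perfect_copositive A \<longleftrightarrow> perfect A \<and> A $ 1 $ 2 < 0"
proof -
  have s: "A$2$1 = A$1$2" using assms symm2 by auto
  show ?thesis
  proof
    assume PC: "perfect_copositive A"
    hence SC: "strictly_copositive A"
      and uniq: "\<And>Q. symm Q \<Longrightarrow> (\<forall>v \<in> Min_cop A. qf Q v = min_cop A) \<Longrightarrow> Q = A"
      unfolding perfect_copositive_def by auto
    obtain e where e: "e > 0" and H: "\<And>B'. symm B' \<Longrightarrow> norm (B' - A) < e \<Longrightarrow> copositive B'"
      using SC unfolding strictly_copositive_def by blast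
    define t where "t = e/3"
    have t: "t > 0" using e t_def by simp
    define B' :: "real^2^2" where "B' = (\<chi> i j. A$i$j - (if i = j then t else 0))"
    have Bij: "B'$i$j = A$i$j - (if i = j then t else 0)" for i j by (simp add: B'_def)
    have "symm B'" unfolding symm2 Bij using s by simp
    moreover have "norm (B' - A) < e"
    proof -
      have "norm (B' - A) \<le> 2*t" using norm_le_l1_2[of "B' - A"] t by (simp add: Bij)
      thus ?thesis using t t_def e by simp
    qed
    ultimately have "copositive B'" by (rule H)
    hence posc: "qf A x \<ge> t*((x$1)^2+(x$2)^2)" if "nonneg_vec x" for x
      using that unfolding copositive_def qf2 Bij by (simp add: algebra_simps)
    have bdd: "qf A x \<ge> 0" if "nonneg_vec x" for x
      using posc[OF that] t by (smt (verit) mult_nonneg_nonneg zero_le_power2)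
    have nn10: "nonneg_vec (v2 1 0)" "nonneg_vec (v2 0 1)"
      by (auto simp: nonneg_vec_def forall_2)
    have a: "A$1$1 \<ge> t" using posc[OF nn10(1)] by (simp add: qf2)
    have c: "A$2$2 \<ge> t" using posc[OF nn10(2)] by (simp add: qf2)
    have mle: "min_cop A \<le> A$1$1"
      using min_cop_le[OF bdd, of "v2 1 0"] nn10
      by (auto simp: int_vec_def forall_2 vec2_eq qf2)
    have b: "A$1$2 < 0"
    proof (rule ccontr)
      assume "\<not> A$1$2 < 0"
      hence b0: "A$1$2 \<ge> 0" by simp
      define Q :: "real^2^2" where "Q = (\<chi> i j. A$i$j + (if i = j then 0 else 1))"
      have Qij: "Q$i$j = A$i$j + (if i = j then 0 else 1)" for i j by (simp add: Q_def)
      have sQ: "symm Q" unfolding symm2 Qij using s by simp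
      have "Q \<noteq> A" by (auto simp: mat2_eq Qij)
      moreover have "\<forall>v \<in> Min_cop A. qf Q v = min_cop A"
      proof
        fix v assume "v \<in> Min_cop A"
        hence v: "int_vec v" "nonneg_vec v" "qf A v = min_cop A" by (auto simp: Min_cop_def)
        have "v$1 * v$2 = 0"
        proof (rule ccontr)
          assume "v$1 * v$2 \<noteq> 0"
          hence nz: "v$1 \<noteq> 0" "v$2 \<noteq> 0" by auto
          have "v$1 \<ge> 1" "v$2 \<ge> 1" using v(1,2) nz int_ge1
            unfolding int_vec_def nonneg_vec_def by (metis less_eq_real_def)+
          hence "(v$1)^2 \<ge> 1" "(v$2)^2 \<ge> 1" "v$1 * v$2 \<ge> 0" by (auto simp: one_le_power)
          hence "A$1$1*(v$1)^2 \<ge> A$1$1" "A$2$2*(v$2)^2 \<ge> A$2$2" "A$1$2*(v$1 * v$2) \<ge> 0"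
            using a c t b0 by (auto simp: mult_le_cancel_left1)
          hence "qf A v \<ge> A$1$1 + A$2$2" unfolding qf2 s by (simp add: distrib_right)
          thus False using v(3) mle c t by linarith
        qed
        thus "qf Q v = min_cop A" using v(3) unfolding qf2 Qij by (auto simp: distrib_right)
      qed
      ultimately show False using uniq[OF sQ] by blast
    qed
    have meq: "min_cl A = min_cop A" using min_eq[OF assms _ bdd] b by simp
    have pd: "pos_def A"
      unfolding pos_def_def
    proof (intro conjI allI impI)
      show "symm A" by fact
      fix x :: "real^2" assume "x \<noteq> 0"
      hence "x$1 \<noteq> 0 \<or> x$2 \<noteq> 0" by (auto simp: vec2_eq)
      hence "(x$1)^2 + (x$2)^2 > 0" by (auto simp: add_pos_nonneg add_nonneg_pos)
      hence "0 < t*((\<bar>x$1\<bar>)^2+(\<bar>x$2\<bar>)^2)" using t by simp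
      also have "\<dots> \<le> qf A (absv x)" using posc[OF nonneg_absv] by simp
      also have "\<dots> \<le> qf A x" using qf_absv_le[OF assms] b by simp
      finally show "qf A x > 0" .
    qed
    have "perfect A"
      unfolding perfect_def
    proof (intro conjI allI impI)
      show "pos_def A" by fact
      fix Q' :: "real^2^2" assume sQ: "symm Q'" and HQ: "\<forall>v\<in>Min_cl A. qf Q' v = min_cl A"
      show "Q' = A"
      proof (rule uniq[OF sQ], intro ballI)
        fix v assume "v \<in> Min_cop A"
        hence "v \<in> Min_cl A" using meq by (auto simp: Min_cop_def Min_cl_def)
        thus "qf Q' v = min_cop A" using HQ meq by simp
      qed
    qed
    thus "perfect A \<and> A$1$2 < 0" using b by simp
  next
    assume "perfect A \<and> A$1$2 < 0"
    hence P: "perfect A" and b: "A$1$2 < 0" by auto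
    have pd: "pos_def A" using P perfect_def by blast
    hence pos: "qf A x > 0" if "x \<noteq> 0" for x using that pos_def_def by blast
    have bdd: "qf A x \<ge> 0" for x using pos[of x] by (cases "x = 0") auto
    have a: "A$1$1 > 0" using pos[of "v2 1 0"] by (simp add: qf2 vec2_eq)
    have c: "A$2$2 > 0" using pos[of "v2 0 1"] by (simp add: qf2 vec2_eq)
    define a' where "a' = A$1$1"
    define b' where "b' = A$1$2"
    define c' where "c' = A$2$2"
    have "qf A (v2 (-b') a') = a' * (a'*c' - b'^2)"
      unfolding qf2 s a'_def b'_def c'_def by (simp add: algebra_simps power2_eq_square)
    moreover have "qf A (v2 (-b') a') > 0" using a a'_def by (intro pos) (simp add: vec2_eq)
    ultimately have det: "a'*c' - b'^2 > 0" using a a'_def by (simp add: zero_less_mult_iff)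
    define lam where "lam = (a'*c' - b'^2)/(a'+c')"
    have lam: "lam > 0" using det a c a'_def c'_def lam_def by simp
    have qlow: "qf A x \<ge> lam * ((x$1)^2+(x$2)^2)" for x
    proof -
      have id: "(a'+c') * qf A x - (a'*c' - b'^2)*((x$1)^2+(x$2)^2)
            = (a'*x$1 + b'*x$2)^2 + (b'*x$1 + c'*x$2)^2"
        unfolding qf2 s a'_def b'_def c'_def by (simp add: algebra_simps power2_eq_square)
      have "(a'+c') * qf A x \<ge> (a'*c' - b'^2)*((x$1)^2+(x$2)^2)"
        using id by (smt (verit) zero_le_power2)
      moreover have "a'+c' > 0" using a c a'_def c'_def by simp
      ultimately show ?thesis unfolding lam_def
        by (simp add: divide_le_eq mult.commute mult.left_commute)
    qed
    have SC: "strictly_copositive A"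
      unfolding strictly_copositive_def
    proof (intro conjI exI[of _ "lam/2"] allI impI)
      show "symm A" by fact
      show "lam/2 > 0" using lam by simp
      fix B' :: "real^2^2" assume "symm B' \<and> norm (B' - A) < lam/2"
      hence sB: "symm B'" and nB: "norm (B' - A) < lam/2" by auto
      define e where "e = lam/2"
      have d: "\<bar>B'$i$j - A$i$j\<bar> < e" for i j
        using entry_le_norm[of "B' - A" i j] nB e_def by simp
      have sB': "B'$2$1 = B'$1$2" using sB symm2 by auto
      show "copositive B'"
        unfolding copositive_def
      proof (intro conjI allI impI)
        show "symm B'" by fact
        fix x :: "real^2"
        define p where "p = x$1*x$2"
        define d1 where "d1 = B'$1$1 - A$1$1"
        define d2 where "d2 = B'$1$2 - A$1$2"
        define d3 where "d3 = B'$2$2 - A$2$2"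
        have e1: "d1*(x$1)^2 \<ge> -e*(x$1)^2"
          using d[of 1 1] mult_right_mono[of "-e" d1 "(x$1)^2"] d1_def by simp
        have e3: "d3*(x$2)^2 \<ge> -e*(x$2)^2"
          using d[of 2 2] mult_right_mono[of "-e" d3 "(x$2)^2"] d3_def by simp
        have "\<bar>d2*p\<bar> \<le> e*\<bar>p\<bar>"
          using d[of 1 2] d2_def by (simp add: abs_mult mult_right_mono)
        hence e2: "d2*p \<ge> -e*\<bar>p\<bar>" by linarith
        have pp: "2*\<bar>p\<bar> \<le> (x$1)^2+(x$2)^2"
        proof -
          have "0 \<le> (\<bar>x$1\<bar> - \<bar>x$2\<bar>)^2" by simp
          thus ?thesis unfolding p_def by (simp add: power2_eq_square algebra_simps abs_mult)
        qed
        have "e*(2*\<bar>p\<bar>) \<le> e*((x$1)^2+(x$2)^2)" using pp e_def lam by simp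
        have "qf B' x = qf A x + d1*(x$1)^2 + 2*(d2*p) + d3*(x$2)^2"
          unfolding qf2 sB' s d1_def d2_def d3_def p_def by (simp add: algebra_simps)
        also have "\<dots> \<ge> lam*((x$1)^2+(x$2)^2) - e*(x$1)^2 - e*(2*\<bar>p\<bar>) - e*(x$2)^2"
          using qlow[of x] e1 e2 e3 by linarith
        finally show "qf B' x \<ge> 0"
          using \<open>e*(2*\<bar>p\<bar>) \<le> e*((x$1)^2+(x$2)^2)\<close> e_def by (simp add: algebra_simps)
      qed
    qed
    have meq: "min_cl A = min_cop A" using min_eq[OF assms _ bdd] b by simp
    show "perfect_copositive A"
      unfolding perfect_copositive_def
    proof (intro conjI allI impI)
      show "strictly_copositive A" by fact
      fix Q :: "real^2^2" assume sQ: "symm Q" and HQ: "\<forall>v\<in>Min_cop A. qf Q v = min_cop A"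
      have "\<forall>v\<in>Min_cl A. qf Q v = min_cl A"
      proof
        fix v assume "v \<in> Min_cl A"
        hence v: "int_vec v" "qf A v = min_cop A" using meq by (auto simp: Min_cl_def)
        show "qf Q v = min_cl A"
        proof (cases "v = 0")
          case True thus ?thesis using v meq by simp
        next
          case False
          have "min_cop A \<le> qf A (absv v)"
            using min_cop_le[OF bdd] int_absv[OF v(1)] nonneg_absv absv_nz[OF False] by blast
          moreover have le: "qf A (absv v) \<le> qf A v" using qf_absv_le[OF assms] b by simp
          ultimately have eq: "qf A (absv v) = min_cop A" using v(2) by simp
          have "v$1 * v$2 \<ge> 0"
          proof (rule ccontr)
            assume "\<not> v$1 * v$2 \<ge> 0"
            hence "qf A (absv v) < qf A v" using qf_absv_lt[OF assms b] by simp
            thus False using eq v(2) by simp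
          qed
          hence "qf Q v = qf Q (absv v)" using qf_absv_eq[OF sQ] by simp
          also have "\<dots> = min_cop A"
            using HQ eq int_absv[OF v(1)] nonneg_absv by (auto simp: Min_cop_def)
          finally show ?thesis using meq by simp
        qed
      qed
      thus "Q = A" using P sQ unfolding perfect_def by blast
    qed
  qed
qed

end
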